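(* For $\boldsymbol\theta\in\boldsymbol\Theta$ and $i\in\mathcal S,a\in\mathcal A$ define $$D_{i,a}(\boldsymbol\theta)=\pi^{\boldsymbol\theta}(i)\Big\{\sum_{j\in\mathcal S}p^a(i,j)g^{\boldsymbol\theta}(j)+r(i,a)-\beta r(i,a)^2+2\beta J^{\boldsymbol\theta}_\mu r(i,a)\Big\}.$$ Then $D_{i,a}(\boldsymbol\theta)$ is the derivative of the combined metric with respect to $\theta_{i,a}$, in the sense that for every $\boldsymbol\theta'\in\boldsymbol\Theta$, $$\frac{\mathrm d}{\mathrm dt}J^{\boldsymbol\theta+t(\boldsymbol\theta'-\boldsymbol\theta)}_{\mu,\sigma}\Big|_{t=0^+}=\sum_{i\in\mathcal S}\sum_{a\in\mathcal A}(\theta'_{i,a}-\theta_{i,a})\,D_{i,a}(\boldsymbol\theta).$$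
   Context: Let $\mathcal S=\{1,\dots,S\}$ be a finite state space and $\mathcal A$ a finite action set, with transition probabilities $p^a(i,j)\ge0$ ($\sum_j p^a(i,j)=1$) and rewards $r(i,a)\in\mathbb R$. Standing assumption: for every deterministic map $d:\mathcal S\to\mathcal A$, the matrix with entries $p^{d(i)}(i,j)$ is irreducible. The randomized policy space is $\boldsymbol\Theta=\{\boldsymbol\theta=(\theta_{i,a}):\theta_{i,a}\ge0,\ \sum_a\theta_{i,a}=1\ \forall i\}$ ($\theta_{i,a}$ = probability of action $a$ in state $i$); it is convex. Under $\boldsymbol\theta$ the transition matrix is $P^{\boldsymbol\theta}(i,j)=\sum_a p^a(i,j)\theta_{i,a}$; it is irreducible with unique stationary distribution $\boldsymbol\pi^{\boldsymbol\theta}$ having positive entries. The mean is $J^{\boldsymbol\theta}_\mu=\sum_i\pi^{\boldsymbol\theta}(i)\sum_a\theta_{i,a}r(i,a)$; for fixed $\beta>0$, $f^{\boldsymbol\theta}(i)=\sum_a\theta_{i,a}[r(i,a)-\beta(r(i,a)-J^{\boldsymbol\theta}_\mu)^2]$ and $J^{\boldsymbol\theta}_{\mu,\sigma}=\sum_i\pi^{\boldsymbol\theta}(i)f^{\boldsymbol\theta}(i)$. The potential $\mathbf g^{\boldsymbol\theta}$ is any solution of $\mathbf g^{\boldsymbol\theta}=\mathbf f^{\boldsymbol\theta}-J^{\boldsymbol\theta}_{\mu,\sigma}\mathbf 1+P^{\boldsymbol\theta}\mathbf g^{\boldsymbol\theta}$ (the right-hand side of the claimed formula does not depend on the choice). 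*)

theory Defs
  imports "HOL-Analysis.Analysis"
begin

definition irreducible_mat :: "('s \<Rightarrow> 's \<Rightarrow> real) \<Rightarrow> bool" where
  "irreducible_mat M \<longleftrightarrow> (\<forall>i j. (i, j) \<in> {(x, y). M x y > 0}\<^sup>*)"

(* randomized policy space Theta; theta i a = probability of action a in state i *)
definition Theta :: "('s::finite \<Rightarrow> 'a::finite \<Rightarrow> real) set" where
  "Theta = {\<theta>. (\<forall>i a. \<theta> i a \<ge> 0) \<and> (\<forall>i. (\<Sum>a\<in>UNIV. \<theta> i a) = 1)}"

(* transition matrix under theta; p a i j = p^a(i,j) *)
definition Pth :: "('a::finite \<Rightarrow> 's \<Rightarrow> 's \<Rightarrow> real) \<Rightarrow> ('s \<Rightarrow> 'a \<Rightarrow> real) \<Rightarrow> 's \<Rightarrow> 's \<Rightarrow> real" where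
  "Pth p \<theta> i j = (\<Sum>a\<in>UNIV. p a i j * \<theta> i a)"

definition stat_dist :: "('a::finite \<Rightarrow> 's::finite \<Rightarrow> 's \<Rightarrow> real) \<Rightarrow> ('s \<Rightarrow> 'a \<Rightarrow> real) \<Rightarrow> 's \<Rightarrow> real" where
  "stat_dist p \<theta> = (THE \<pi>. (\<forall>j. \<pi> j = (\<Sum>i\<in>UNIV. \<pi> i * Pth p \<theta> i j)) \<and> (\<Sum>i\<in>UNIV. \<pi> i) = 1)"

definition J_mu :: "('a::finite \<Rightarrow> 's::finite \<Rightarrow> 's \<Rightarrow> real) \<Rightarrow> ('s \<Rightarrow> 'a \<Rightarrow> real) \<Rightarrow> ('s \<Rightarrow> 'a \<Rightarrow> real) \<Rightarrow> real" where
  "J_mu p r \<theta> = (\<Sum>i\<in>UNIV. stat_dist p \<theta> i * (\<Sum>a\<in>UNIV. \<theta> i a * r i a))"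

definition f_th :: "('a::finite \<Rightarrow> 's::finite \<Rightarrow> 's \<Rightarrow> real) \<Rightarrow> ('s \<Rightarrow> 'a \<Rightarrow> real) \<Rightarrow> real \<Rightarrow> ('s \<Rightarrow> 'a \<Rightarrow> real) \<Rightarrow> 's \<Rightarrow> real" where
  "f_th p r \<beta> \<theta> i = (\<Sum>a\<in>UNIV. \<theta> i a * (r i a - \<beta> * (r i a - J_mu p r \<theta>)\<^sup>2))"

definition J_mu_sigma :: "('a::finite \<Rightarrow> 's::finite \<Rightarrow> 's \<Rightarrow> real) \<Rightarrow> ('s \<Rightarrow> 'a \<Rightarrow> real) \<Rightarrow> real \<Rightarrow> ('s \<Rightarrow> 'a \<Rightarrow> real) \<Rightarrow> real" where
  "J_mu_sigma p r \<beta> \<theta> = (\<Sum>i\<in>UNIV. stat_dist p \<theta> i * f_th p r \<beta> \<theta> i)"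

definition is_potential :: "('a::finite \<Rightarrow> 's::finite \<Rightarrow> 's \<Rightarrow> real) \<Rightarrow> ('s \<Rightarrow> 'a \<Rightarrow> real) \<Rightarrow> real \<Rightarrow> ('s \<Rightarrow> 'a \<Rightarrow> real) \<Rightarrow> ('s \<Rightarrow> real) \<Rightarrow> bool" where
  "is_potential p r \<beta> \<theta> g \<longleftrightarrow>
     (\<forall>i. g i = f_th p r \<beta> \<theta> i - J_mu_sigma p r \<beta> \<theta> + (\<Sum>j\<in>UNIV. Pth p \<theta> i j * g j))"

definition D_ia :: "('a::finite \<Rightarrow> 's::finite \<Rightarrow> 's \<Rightarrow> real) \<Rightarrow> ('s \<Rightarrow> 'a \<Rightarrow> real) \<Rightarrow> real \<Rightarrow> ('s \<Rightarrow> real) \<Rightarrow> ('s \<Rightarrow> 'a \<Rightarrow> real) \<Rightarrow> 's \<Rightarrow> 'a \<Rightarrow> real" where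
  "D_ia p r \<beta> g \<theta> i a = stat_dist p \<theta> i *
     ((\<Sum>j\<in>UNIV. p a i j * g j) + r i a - \<beta> * (r i a)\<^sup>2 + 2 * \<beta> * J_mu p r \<theta> * r i a)"

end

theory Submission
  imports Defs
begin


definition stoch :: "('s::finite \<Rightarrow> 's \<Rightarrow> real) \<Rightarrow> bool" where
  "stoch Q \<longleftrightarrow> (\<forall>i j. Q i j \<ge> 0) \<and> (\<forall>i. (\<Sum>j\<in>UNIV. Q i j) = 1)"

definition statv :: "('s::finite \<Rightarrow> 's \<Rightarrow> real) \<Rightarrow> ('s \<Rightarrow> real) \<Rightarrow> bool" where
  "statv Q v \<longleftrightarrow> (\<forall>j. v j = (\<Sum>i\<in>UNIV. v i * Q i j))"

lemma reach:
  assumes "irreducible_mat Q" "Z k" "\<And>i j. Z i \<Longrightarrow> Q i j > 0 \<Longrightarrow> Z j"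
  shows "Z j"
proof -
  have "(k, j) \<in> {(x, y). Q x y > 0}\<^sup>*" using assms(1) unfolding irreducible_mat_def by blast
  then show ?thesis
    by (induction rule: rtrancl_induct) (use assms in auto)
qed

lemma statv_lin:
  assumes "statv Q x" "statv Q y"
  shows "statv Q (\<lambda>i. a * x i + b * y i)"
  unfolding statv_def
proof
  fix j
  have "a * x j + b * y j = a * (\<Sum>i\<in>UNIV. x i * Q i j) + b * (\<Sum>i\<in>UNIV. y i * Q i j)"
    using assms unfolding statv_def by metis
  also have "\<dots> = (\<Sum>i\<in>UNIV. (a * x i + b * y i) * Q i j)"
    by (simp add: sum_distrib_left sum.distrib algebra_simps)
  finally show "a * x j + b * y j = (\<Sum>i\<in>UNIV. (a * x i + b * y i) * Q i j)" .
qed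

lemma stat_apply:
  assumes "statv Q \<pi>"
  shows "(\<Sum>i\<in>UNIV. \<pi> i * (\<Sum>j\<in>UNIV. Q i j * h j)) = (\<Sum>j\<in>UNIV. \<pi> j * h j)"
proof -
  have "(\<Sum>i\<in>UNIV. \<pi> i * (\<Sum>j\<in>UNIV. Q i j * h j)) = (\<Sum>i\<in>UNIV. \<Sum>j\<in>UNIV. \<pi> i * Q i j * h j)"
    by (simp add: sum_distrib_left mult.assoc)
  also have "\<dots> = (\<Sum>j\<in>UNIV. \<Sum>i\<in>UNIV. \<pi> i * Q i j * h j)" by (rule sum.swap)
  also have "\<dots> = (\<Sum>j\<in>UNIV. (\<Sum>i\<in>UNIV. \<pi> i * Q i j) * h j)" by (simp add: sum_distrib_right)
  also have "\<dots> = (\<Sum>j\<in>UNIV. \<pi> j * h j)"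
    using assms unfolding statv_def by (metis (no_types, lifting))
  finally show ?thesis .
qed

lemma abs_stat:
  assumes "stoch Q" "statv Q v"
  shows "statv Q (\<lambda>i. \<bar>v i\<bar>)"
proof -
  have Qn: "\<And>i j. Q i j \<ge> 0" and Qs: "\<And>i. (\<Sum>j\<in>UNIV. Q i j) = 1"
    using assms(1) unfolding stoch_def by auto
  have le: "\<bar>v j\<bar> \<le> (\<Sum>i\<in>UNIV. \<bar>v i\<bar> * Q i j)" for j
  proof -
    have "\<bar>v j\<bar> = \<bar>\<Sum>i\<in>UNIV. v i * Q i j\<bar>" using assms(2) unfolding statv_def by metis
    also have "\<dots> \<le> (\<Sum>i\<in>UNIV. \<bar>v i * Q i j\<bar>)" by (rule sum_abs)
    also have "\<dots> = (\<Sum>i\<in>UNIV. \<bar>v i\<bar> * Q i j)" using Qn by (simp add: abs_mult)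
    finally show ?thesis .
  qed
  have "(\<Sum>j\<in>UNIV. (\<Sum>i\<in>UNIV. \<bar>v i\<bar> * Q i j)) = (\<Sum>i\<in>UNIV. \<Sum>j\<in>UNIV. \<bar>v i\<bar> * Q i j)"
    by (rule sum.swap)
  also have "\<dots> = (\<Sum>i\<in>UNIV. \<bar>v i\<bar> * (\<Sum>j\<in>UNIV. Q i j))" by (simp add: sum_distrib_left)
  also have "\<dots> = (\<Sum>j\<in>UNIV. \<bar>v j\<bar>)" using Qs by simp
  finally have "(\<Sum>j\<in>UNIV. (\<Sum>i\<in>UNIV. \<bar>v i\<bar> * Q i j) - \<bar>v j\<bar>) = 0" by (simp add: sum_subtractf)
  then have "\<forall>j\<in>UNIV. (\<Sum>i\<in>UNIV. \<bar>v i\<bar> * Q i j) - \<bar>v j\<bar> = 0"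
    using le by (subst sum_nonneg_eq_0_iff[symmetric]) auto
  then show ?thesis unfolding statv_def by auto
qed

lemma pos_stat:
  assumes "stoch Q" "irreducible_mat Q" "statv Q w" "\<And>i. w i \<ge> 0" "w k > 0"
  shows "w j > 0"
  using assms(2,5)
proof (rule reach)
  fix a b assume "w a > 0" "Q a b > 0"
  then have "0 < w a * Q a b" by simp
  also have "\<dots> \<le> (\<Sum>i\<in>UNIV. w i * Q i b)"
    by (rule member_le_sum) (use assms(1,4) in \<open>auto simp: stoch_def\<close>)
  also have "\<dots> = w b" using assms(3) unfolding statv_def by metis
  finally show "w b > 0" .
qed

lemma left_unique:
  assumes "stoch Q" "irreducible_mat Q" "statv Q v" "(\<Sum>i\<in>UNIV. v i) = 0"
  shows "v j = 0"
proof (rule ccontr)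
  assume nz: "v j \<noteq> 0"
  have ex: "\<exists>k. v k > 0"
  proof (rule ccontr)
    assume "\<not> ?thesis"
    then have n: "\<forall>i. - v i \<ge> 0" by (auto simp: not_less)
    have "(\<Sum>i\<in>UNIV. - v i) = 0" using assms(4) by (simp add: sum_negf)
    then have "\<forall>i\<in>UNIV. - v i = 0" using n by (subst sum_nonneg_eq_0_iff[symmetric]) auto
    with nz show False by simp
  qed
  then obtain k where k: "v k > 0" by blast
  define u where "u = (\<lambda>i. (1/2) * \<bar>v i\<bar> + (1/2) * v i)"
  have su: "statv Q u" unfolding u_def by (rule statv_lin[OF abs_stat[OF assms(1,3)] assms(3)])
  have un: "u i \<ge> 0" for i unfolding u_def by auto
  have "u k > 0" using k unfolding u_def by auto
  then have "\<forall>i. u i > 0" using pos_stat[OF assms(1,2) su un] by blast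
  then have up: "\<forall>i. u i > 0" .
  have vp: "\<forall>i. v i > 0"
  proof
    fix i show "v i > 0"
    proof (rule ccontr)
      assume "\<not> v i > 0" hence "\<bar>v i\<bar> = - v i" by auto
      hence "u i = 0" unfolding u_def by simp
      with up[rule_format, of i] show False by simp
    qed
  qed
  have "(\<Sum>i\<in>UNIV. v i) > 0" by (rule sum_pos) (use vp in auto)
  with assms(4) show False by simp
qed



lemma fun_inj_surj:
  fixes T :: "('s::finite \<Rightarrow> real) \<Rightarrow> ('s \<Rightarrow> real)"
  assumes add: "\<And>x y. T (\<lambda>i. x i + y i) = (\<lambda>i. T x i + T y i)"
    and hom: "\<And>c x. T (\<lambda>i. c * x i) = (\<lambda>i. c * T x i)"
    and ker: "\<And>x. T x = (\<lambda>_. 0) \<Longrightarrow> x = (\<lambda>_. 0)"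
  shows "\<exists>x. T x = y"
proof -
  define F where "F = (\<lambda>v::real^'s. vec_lambda (T (vec_nth v)))"
  have lin: "linear F"
  proof (rule linearI)
    fix u v :: "real^'s"
    have e: "vec_nth (u + v) = (\<lambda>i. u $ i + v $ i)" by (rule ext) simp
    show "F (u + v) = F u + F v" unfolding F_def e add by (simp add: vec_eq_iff)
  next
    fix c :: real and u :: "real^'s"
    have e: "vec_nth (c *\<^sub>R u) = (\<lambda>i. c * u $ i)" by (rule ext) simp
    show "F (c *\<^sub>R u) = c *\<^sub>R F u" unfolding F_def e hom by (simp add: vec_eq_iff)
  qed
  have "inj F"
    unfolding linear_injective_0[OF lin]
  proof (intro allI impI)
    fix x assume "F x = 0"
    then have "T (vec_nth x) = (\<lambda>_. 0)" unfolding F_def by (simp add: vec_eq_iff fun_eq_iff)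
    then have "vec_nth x = (\<lambda>_. 0)" by (rule ker)
    then show "x = 0" by (simp add: vec_eq_iff)
  qed
  then have "surj F" using linear_injective_imp_surjective[OF lin] by simp
  then obtain v where "F v = vec_lambda y" by (metis surjD)
  then have "T (vec_nth v) = y" unfolding F_def by (simp add: vec_lambda_inject)
  then show ?thesis by blast
qed

lemma sum_others_zero:
  fixes D :: "'s::finite \<Rightarrow> real"
  assumes "\<And>j. j \<noteq> k \<Longrightarrow> D j = 0" "(\<Sum>j\<in>UNIV. D j) = 0"
  shows "D k = 0"
proof -
  have "(\<Sum>j\<in>UNIV. D j) = D k + (\<Sum>j\<in>UNIV - {k}. D j)" by (simp add: sum.remove)
  also have "(\<Sum>j\<in>UNIV - {k}. D j) = 0" using assms(1) by (intro sum.neutral) auto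
  finally show ?thesis using assms(2) by simp
qed

lemma exists_stat:
  fixes Q :: "'s::finite \<Rightarrow> 's \<Rightarrow> real"
  assumes st: "stoch Q" and irr: "irreducible_mat Q"
  shows "\<exists>\<pi>. statv Q \<pi> \<and> (\<Sum>i\<in>UNIV. \<pi> i) = 1"
proof -
  obtain k :: 's where True by simp
  have Qs: "\<And>i. (\<Sum>j\<in>UNIV. Q i j) = 1" using st unfolding stoch_def by auto
  define T where "T = (\<lambda>x::'s\<Rightarrow>real. \<lambda>j. if j = k then (\<Sum>i\<in>UNIV. x i) else x j - (\<Sum>i\<in>UNIV. x i * Q i j))"
  have key: "(\<Sum>j\<in>UNIV. x j - (\<Sum>i\<in>UNIV. x i * Q i j)) = (\<Sum>i\<in>UNIV. x i) - (\<Sum>i\<in>UNIV. x i)" for x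
  proof -
    have "(\<Sum>j\<in>UNIV. \<Sum>i\<in>UNIV. x i * Q i j) = (\<Sum>i\<in>UNIV. \<Sum>j\<in>UNIV. x i * Q i j)" by (rule sum.swap)
    also have "\<dots> = (\<Sum>i\<in>UNIV. x i)" by (simp add: sum_distrib_left[symmetric] Qs)
    finally show ?thesis by (simp add: sum_subtractf)
  qed
  have stat_of: "statv Q x" if "\<And>j. j \<noteq> k \<Longrightarrow> x j - (\<Sum>i\<in>UNIV. x i * Q i j) = 0" for x
  proof -
    have "x k - (\<Sum>i\<in>UNIV. x i * Q i k) = 0"
      by (rule sum_others_zero[where D = "\<lambda>j. x j - (\<Sum>i\<in>UNIV. x i * Q i j)"]) (use that key in auto)
    then show ?thesis using that unfolding statv_def by (metis eq_iff_diff_eq_0)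
  qed
  have "\<exists>x. T x = (\<lambda>j. if j = k then 1 else 0)"
  proof (rule fun_inj_surj)
    fix x y :: "'s \<Rightarrow> real"
    show "T (\<lambda>i. x i + y i) = (\<lambda>i. T x i + T y i)"
      unfolding T_def by (auto simp: fun_eq_iff sum.distrib algebra_simps)
  next
    fix c and x :: "'s \<Rightarrow> real"
    show "T (\<lambda>i. c * x i) = (\<lambda>i. c * T x i)"
      unfolding T_def by (auto simp: fun_eq_iff sum_distrib_left algebra_simps)
  next
    fix x :: "'s \<Rightarrow> real" assume T0: "T x = (\<lambda>_. 0)"
    have s0: "(\<Sum>i\<in>UNIV. x i) = 0" using fun_cong[OF T0, of k] unfolding T_def by simp
    have "statv Q x"
    proof (rule stat_of)
      fix j assume "j \<noteq> k"
      then show "x j - (\<Sum>i\<in>UNIV. x i * Q i j) = 0" using fun_cong[OF T0, of j] unfolding T_def by simp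
    qed
    then show "x = (\<lambda>_. 0)" using left_unique[OF st irr _ s0] by auto
  qed
  then obtain x where Tx: "T x = (\<lambda>j. if j = k then 1 else 0)" by blast
  have s1: "(\<Sum>i\<in>UNIV. x i) = 1" using fun_cong[OF Tx, of k] unfolding T_def by simp
  have "statv Q x"
  proof (rule stat_of)
    fix j assume "j \<noteq> k"
    then show "x j - (\<Sum>i\<in>UNIV. x i * Q i j) = 0" using fun_cong[OF Tx, of j] unfolding T_def by simp
  qed
  with s1 show ?thesis by blast
qed

lemma max_principle:
  assumes st: "stoch Q" and irr: "irreducible_mat Q" and h: "\<And>i. h i = (\<Sum>j\<in>UNIV. Q i j * h j)"
  shows "h i = h j"
proof -
  have Qn: "\<And>i j. Q i j \<ge> 0" and Qs: "\<And>i. (\<Sum>j\<in>UNIV. Q i j) = 1"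
    using st unfolding stoch_def by auto
  define M where "M = Max (range h)"
  have le: "h x \<le> M" for x unfolding M_def by simp
  have "M \<in> range h" unfolding M_def by (rule Max_in) auto
  then obtain k where k: "h k = M" by auto
  have all: "h x = M" for x
    using irr k
  proof (rule reach)
    fix a b assume ha: "h a = M" and q: "Q a b > 0"
    have "(\<Sum>j\<in>UNIV. Q a j * (M - h j)) = M * (\<Sum>j\<in>UNIV. Q a j) - (\<Sum>j\<in>UNIV. Q a j * h j)"
      by (simp add: algebra_simps sum_subtractf sum_distrib_left)
    also have "\<dots> = 0" using Qs[of a] h[of a] ha by simp
    finally have "\<forall>j\<in>UNIV. Q a j * (M - h j) = 0"
      using Qn le by (subst sum_nonneg_eq_0_iff[symmetric]) auto
    then have "Q a b * (M - h b) = 0" by simp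
    with q show "h b = M" by simp
  qed
  then show ?thesis by simp
qed

lemma poisson:
  fixes Q :: "'s::finite \<Rightarrow> 's \<Rightarrow> real"
  assumes st: "stoch Q" and irr: "irreducible_mat Q" and sp: "statv Q \<pi>" and s1: "(\<Sum>i\<in>UNIV. \<pi> i) = 1"
  shows "\<exists>h. \<forall>i. h i - (\<Sum>j\<in>UNIV. Q i j * h j) = c i - (\<Sum>j\<in>UNIV. \<pi> j * c j)"
proof -
  define T where "T = (\<lambda>h::'s\<Rightarrow>real. \<lambda>i. h i - (\<Sum>j\<in>UNIV. Q i j * h j) + (\<Sum>j\<in>UNIV. \<pi> j * h j))"
  have piT: "(\<Sum>i\<in>UNIV. \<pi> i * T h i) = (\<Sum>j\<in>UNIV. \<pi> j * h j)" for h
  proof -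
    have "(\<Sum>i\<in>UNIV. \<pi> i * T h i) = (\<Sum>i\<in>UNIV. \<pi> i * (h i - (\<Sum>j\<in>UNIV. Q i j * h j)))
        + (\<Sum>i\<in>UNIV. \<pi> i) * (\<Sum>j\<in>UNIV. \<pi> j * h j)"
      unfolding T_def by (simp add: distrib_left sum.distrib sum_distrib_right)
    also have "(\<Sum>i\<in>UNIV. \<pi> i * (h i - (\<Sum>j\<in>UNIV. Q i j * h j))) = (\<Sum>i\<in>UNIV. \<pi> i * h i) - (\<Sum>i\<in>UNIV. \<pi> i * (\<Sum>j\<in>UNIV. Q i j * h j))"
      by (simp add: right_diff_distrib sum_subtractf)
    finally have "(\<Sum>i\<in>UNIV. \<pi> i * T h i) = (\<Sum>i\<in>UNIV. \<pi> i * h i) - (\<Sum>i\<in>UNIV. \<pi> i * (\<Sum>j\<in>UNIV. Q i j * h j))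
        + (\<Sum>i\<in>UNIV. \<pi> i) * (\<Sum>j\<in>UNIV. \<pi> j * h j)" .
    then show ?thesis using stat_apply[OF sp, of h] s1 by simp
  qed
  have "\<exists>h. T h = (\<lambda>i. c i - (\<Sum>j\<in>UNIV. \<pi> j * c j))"
  proof (rule fun_inj_surj)
    fix x y :: "'s \<Rightarrow> real"
    show "T (\<lambda>i. x i + y i) = (\<lambda>i. T x i + T y i)"
      unfolding T_def by (auto simp: fun_eq_iff sum.distrib algebra_simps)
  next
    fix c and x :: "'s \<Rightarrow> real"
    show "T (\<lambda>i. c * x i) = (\<lambda>i. c * T x i)"
      unfolding T_def by (auto simp: fun_eq_iff sum_distrib_left algebra_simps)
  next
    fix x :: "'s \<Rightarrow> real" assume T0: "T x = (\<lambda>_. 0)"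
    have px: "(\<Sum>j\<in>UNIV. \<pi> j * x j) = 0" using piT[of x] T0 by simp
    have hx: "x i = (\<Sum>j\<in>UNIV. Q i j * x j)" for i using fun_cong[OF T0, of i] px unfolding T_def by simp
    obtain k :: 's where True by simp
    have xk: "x i = x k" for i by (rule max_principle[OF st irr hx])
    have "(\<Sum>j\<in>UNIV. \<pi> j * x j) = (\<Sum>j\<in>UNIV. \<pi> j * x k)"
      by (rule sum.cong[OF refl]) (metis xk)
    also have "\<dots> = x k" using s1 by (simp add: sum_distrib_right[symmetric])
    finally have "x k = 0" using px by simp
    then show "x = (\<lambda>_. 0)" using xk by auto
  qed
  then obtain h where Th: "T h = (\<lambda>i. c i - (\<Sum>j\<in>UNIV. \<pi> j * c j))" by blast
  have "(\<Sum>j\<in>UNIV. \<pi> j * h j) = (\<Sum>i\<in>UNIV. \<pi> i * (c i - (\<Sum>j\<in>UNIV. \<pi> j * c j)))"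
    using piT[of h] Th by simp
  also have "\<dots> = 0" using s1 by (simp add: algebra_simps sum_subtractf sum_distrib_right[symmetric])
  finally have "\<forall>i. h i - (\<Sum>j\<in>UNIV. Q i j * h j) = c i - (\<Sum>j\<in>UNIV. \<pi> j * c j)"
    using Th unfolding T_def by (auto simp: fun_eq_iff)
  then show ?thesis by blast
qed



lemma Theta_pos:
  assumes "\<theta> \<in> Theta"
  shows "\<exists>a. \<theta> i a > 0"
proof (rule ccontr)
  assume "\<not> ?thesis"
  then have "\<forall>a. \<theta> i a = 0" using assms unfolding Theta_def by (auto simp: not_less intro: order.antisym)
  then have "(\<Sum>a\<in>UNIV. \<theta> i a) = 0" by simp
  with assms show False unfolding Theta_def by simp
qed

lemma Pth_stoch:
  fixes p :: "'a::finite \<Rightarrow> 's::finite \<Rightarrow> 's \<Rightarrow> real"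
  assumes p_nonneg: "\<And>a i j. p a i j \<ge> 0" and p_stoch: "\<And>a i. (\<Sum>j\<in>UNIV. p a i j) = 1"
    and th: "\<theta> \<in> Theta"
  shows "stoch (Pth p \<theta>)"
  unfolding stoch_def
proof (intro conjI allI)
  fix i j
  show "Pth p \<theta> i j \<ge> 0" unfolding Pth_def using th p_nonneg
    by (intro sum_nonneg mult_nonneg_nonneg) (auto simp: Theta_def)
next
  fix i
  have "(\<Sum>j\<in>UNIV. Pth p \<theta> i j) = (\<Sum>a\<in>UNIV. \<Sum>j\<in>UNIV. p a i j * \<theta> i a)"
    unfolding Pth_def by (rule sum.swap)
  also have "\<dots> = (\<Sum>a\<in>UNIV. \<theta> i a)" by (simp add: sum_distrib_right[symmetric] p_stoch)
  also have "\<dots> = 1" using th by (simp add: Theta_def)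
  finally show "(\<Sum>j\<in>UNIV. Pth p \<theta> i j) = 1" .
qed

lemma Pth_irred:
  fixes p :: "'a::finite \<Rightarrow> 's::finite \<Rightarrow> 's \<Rightarrow> real"
  assumes p_nonneg: "\<And>a i j. p a i j \<ge> 0"
    and irred: "\<And>d :: 's \<Rightarrow> 'a. irreducible_mat (\<lambda>i j. p (d i) i j)"
    and th: "\<theta> \<in> Theta"
  shows "irreducible_mat (Pth p \<theta>)"
proof -
  define d where "d = (\<lambda>i. SOME a. \<theta> i a > 0)"
  have dpos: "\<theta> i (d i) > 0" for i unfolding d_def using Theta_pos[OF th] by (metis someI_ex)
  have sub: "{(x, y). p (d x) x y > 0} \<subseteq> {(x, y). Pth p \<theta> x y > 0}"
  proof safe
    fix x y assume "p (d x) x y > 0"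
    then have "0 < p (d x) x y * \<theta> x (d x)" using dpos by simp
    also have "\<dots> \<le> Pth p \<theta> x y" unfolding Pth_def
      by (rule member_le_sum) (use p_nonneg th in \<open>auto simp: Theta_def\<close>)
    finally show "Pth p \<theta> x y > 0" .
  qed
  show ?thesis unfolding irreducible_mat_def
  proof (intro allI)
    fix i j
    have "(i, j) \<in> {(x, y). p (d x) x y > 0}\<^sup>*" using irred[of d] unfolding irreducible_mat_def by blast
    then show "(i, j) \<in> {(x, y). Pth p \<theta> x y > 0}\<^sup>*" using rtrancl_mono[OF sub] by blast
  qed
qed

lemma stat_dist_props:
  fixes p :: "'a::finite \<Rightarrow> 's::finite \<Rightarrow> 's \<Rightarrow> real"
  assumes p_nonneg: "\<And>a i j. p a i j \<ge> 0" and p_stoch: "\<And>a i. (\<Sum>j\<in>UNIV. p a i j) = 1"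
    and irred: "\<And>d :: 's \<Rightarrow> 'a. irreducible_mat (\<lambda>i j. p (d i) i j)"
    and th: "\<theta> \<in> Theta"
  shows "statv (Pth p \<theta>) (stat_dist p \<theta>) \<and> (\<Sum>i\<in>UNIV. stat_dist p \<theta> i) = 1 \<and> (\<forall>i. stat_dist p \<theta> i \<ge> 0)"
proof -
  note st = Pth_stoch[OF p_nonneg p_stoch th]
  note irr = Pth_irred[where p=p, OF p_nonneg irred th]
  have uniq: "x = y" if "statv (Pth p \<theta>) x" "(\<Sum>i\<in>UNIV. x i) = 1" "statv (Pth p \<theta>) y" "(\<Sum>i\<in>UNIV. y i) = 1" for x y
  proof -
    have "statv (Pth p \<theta>) (\<lambda>i. 1 * x i + (-1) * y i)" by (rule statv_lin[OF that(1,3)])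
    moreover have "(\<Sum>i\<in>UNIV. 1 * x i + (-1) * y i) = 0" using that(2,4) by (simp add: sum_subtractf)
    ultimately have "1 * x i + (-1) * y i = 0" for i by (rule left_unique[OF st irr])
    then show ?thesis by (auto simp: fun_eq_iff)
  qed
  obtain \<pi> where \<pi>: "statv (Pth p \<theta>) \<pi>" "(\<Sum>i\<in>UNIV. \<pi> i) = 1" using exists_stat[OF st irr] by blast
  have ex1: "\<exists>!\<pi>. (\<forall>j. \<pi> j = (\<Sum>i\<in>UNIV. \<pi> i * Pth p \<theta> i j)) \<and> (\<Sum>i\<in>UNIV. \<pi> i) = 1"
    using \<pi> uniq unfolding statv_def by blast
  have sd: "statv (Pth p \<theta>) (stat_dist p \<theta>) \<and> (\<Sum>i\<in>UNIV. stat_dist p \<theta> i) = 1"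
    unfolding stat_dist_def statv_def by (rule theI'[OF ex1])
  define s where "s = (\<Sum>i\<in>UNIV. \<bar>stat_dist p \<theta> i\<bar>)"
  have "1 \<le> s" unfolding s_def using sd sum_abs[of "stat_dist p \<theta>" UNIV] by simp
  define w where "w = (\<lambda>i. (1/s) * \<bar>stat_dist p \<theta> i\<bar> + 0 * stat_dist p \<theta> i)"
  have sw: "statv (Pth p \<theta>) w" unfolding w_def
    by (rule statv_lin[OF abs_stat[OF st] ]) (use sd in auto)
  have "(\<Sum>i\<in>UNIV. w i) = s / s" unfolding w_def s_def by (simp add: sum_divide_distrib[symmetric])
  then have "(\<Sum>i\<in>UNIV. w i) = 1" using \<open>1 \<le> s\<close> by simp
  then have "w = stat_dist p \<theta>" using uniq sw sd by blast
  then have "stat_dist p \<theta> i \<ge> 0" for i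
  proof -
    assume e: "w = stat_dist p \<theta>"
    have "w i \<ge> 0" unfolding w_def using \<open>1 \<le> s\<close> by simp
    then show ?thesis using e by simp
  qed
  with sd show ?thesis by blast
qed



theorem lemma3:
  fixes p :: "'a::finite \<Rightarrow> 's::finite \<Rightarrow> 's \<Rightarrow> real"
    and r :: "'s \<Rightarrow> 'a \<Rightarrow> real"
    and \<beta> :: real
    and \<theta> \<theta>' :: "'s \<Rightarrow> 'a \<Rightarrow> real"
    and g :: "'s \<Rightarrow> real"
  assumes p_nonneg: "\<And>a i j. p a i j \<ge> 0"
    and p_stoch: "\<And>a i. (\<Sum>j\<in>UNIV. p a i j) = 1"
    and irred: "\<And>d :: 's \<Rightarrow> 'a. irreducible_mat (\<lambda>i j. p (d i) i j)"
    and beta_pos: "\<beta> > 0"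
    and theta: "\<theta> \<in> Theta"
    and theta': "\<theta>' \<in> Theta"
    and pot: "is_potential p r \<beta> \<theta> g"
  shows "((\<lambda>t. J_mu_sigma p r \<beta> (\<lambda>i a. \<theta> i a + t * (\<theta>' i a - \<theta> i a)))
           has_real_derivative
           (\<Sum>i\<in>UNIV. \<Sum>a\<in>UNIV. (\<theta>' i a - \<theta> i a) * D_ia p r \<beta> g \<theta> i a)) (at_right 0)"
proof -
  define \<Delta> where "\<Delta> = (\<lambda>i a. \<theta>' i a - \<theta> i a)"
  define th where "th = (\<lambda>t::real. \<lambda>i a. \<theta> i a + t * (\<theta>' i a - \<theta> i a))"
  define pt where "pt = (\<lambda>t. stat_dist p (th t))"
  define P0 where "P0 = Pth p \<theta>"
  define dP where "dP = (\<lambda>i j. \<Sum>a\<in>UNIV. p a i j * \<Delta> i a)"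
  define dPv where "dPv = (\<lambda>h::'s\<Rightarrow>real. \<lambda>i. \<Sum>j\<in>UNIV. dP i j * h j)"
  have th0: "th 0 = \<theta>" by (simp add: th_def)
  have thT: "th t \<in> Theta" if "t \<in> {0..1}" for t
  proof -
    have "th t i a \<ge> 0" for i a
    proof -
      have "th t i a = (1 - t) * \<theta> i a + t * \<theta>' i a" by (simp add: th_def algebra_simps)
      also have "\<dots> \<ge> 0" using that theta theta' unfolding Theta_def by (auto intro!: add_nonneg_nonneg mult_nonneg_nonneg)
      finally show ?thesis .
    qed
    moreover have "(\<Sum>a\<in>UNIV. th t i a) = 1" for i
      using theta theta' unfolding Theta_def th_def by (simp add: sum.distrib sum_distrib_left[symmetric] sum_subtractf)
    ultimately show ?thesis unfolding Theta_def by auto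
  qed
  have Pt: "Pth p (th t) i j = P0 i j + t * dP i j" for t i j
  proof -
    have "Pth p (th t) i j = (\<Sum>a\<in>UNIV. p a i j * \<theta> i a + t * (p a i j * \<Delta> i a))"
      unfolding Pth_def th_def \<Delta>_def by (rule sum.cong) (simp_all add: algebra_simps)
    also have "\<dots> = P0 i j + t * dP i j" by (simp add: sum.distrib sum_distrib_left P0_def Pth_def dP_def)
    finally show ?thesis .
  qed
  have props: "statv (Pth p (th t)) (pt t) \<and> (\<Sum>i\<in>UNIV. pt t i) = 1 \<and> (\<forall>i. pt t i \<ge> 0)" if "t \<in> {0..1}" for t
    unfolding pt_def by (rule stat_dist_props[OF p_nonneg p_stoch irred thT[OF that]])
  have pert: "(\<Sum>i\<in>UNIV. pt t i * (h i - (\<Sum>j\<in>UNIV. P0 i j * h j))) = t * (\<Sum>i\<in>UNIV. pt t i * dPv h i)"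
    if "t \<in> {0..1}" for t h
  proof -
    have sA: "(\<Sum>i\<in>UNIV. pt t i * (\<Sum>j\<in>UNIV. Pth p (th t) i j * h j)) = (\<Sum>j\<in>UNIV. pt t j * h j)"
      using stat_apply props[OF that] by blast
    have "(\<Sum>j\<in>UNIV. Pth p (th t) i j * h j) = (\<Sum>j\<in>UNIV. P0 i j * h j) + t * dPv h i" for i
      unfolding Pt dPv_def by (simp add: distrib_right sum.distrib sum_distrib_left mult.assoc)
    then have "(\<Sum>i\<in>UNIV. pt t i * (\<Sum>j\<in>UNIV. Pth p (th t) i j * h j))
        = (\<Sum>i\<in>UNIV. pt t i * (\<Sum>j\<in>UNIV. P0 i j * h j)) + t * (\<Sum>i\<in>UNIV. pt t i * dPv h i)"
      by (simp add: distrib_left sum.distrib sum_distrib_left mult.left_commute)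
    then show ?thesis using sA by (simp add: right_diff_distrib sum_subtractf)
  qed
  have bound: "\<bar>\<Sum>i\<in>UNIV. pt t i * x i\<bar> \<le> (\<Sum>i\<in>UNIV. \<bar>x i\<bar>)" if "t \<in> {0..1}" for t x
  proof -
    have pn: "pt t i \<ge> 0" and s1: "(\<Sum>i\<in>UNIV. pt t i) = 1" for i using props[OF that] by auto
    have p1: "pt t i \<le> 1" for i
    proof -
      have "pt t i \<le> (\<Sum>i\<in>UNIV. pt t i)" by (rule member_le_sum) (use pn in auto)
      then show ?thesis using s1 by simp
    qed
    have "\<bar>\<Sum>i\<in>UNIV. pt t i * x i\<bar> \<le> (\<Sum>i\<in>UNIV. \<bar>pt t i * x i\<bar>)" by (rule sum_abs)
    also have "\<dots> \<le> (\<Sum>i\<in>UNIV. \<bar>x i\<bar>)"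
    proof (rule sum_mono)
      fix i
      have "\<bar>pt t i * x i\<bar> = pt t i * \<bar>x i\<bar>" using pn[of i] by (simp add: abs_mult)
      also have "\<dots> \<le> \<bar>x i\<bar>" by (rule mult_left_le_one_le) (use pn p1 in auto)
      finally show "\<bar>pt t i * x i\<bar> \<le> \<bar>x i\<bar>" .
    qed
    finally show ?thesis .
  qed
  have st0: "statv P0 (pt 0)" and s10: "(\<Sum>i\<in>UNIV. pt 0 i) = 1"
    using props[of 0] th0 unfolding P0_def by auto
  have lip: "\<exists>K. \<forall>t\<in>{0..1}. \<bar>(\<Sum>i\<in>UNIV. pt t i * c i) - (\<Sum>i\<in>UNIV. pt 0 i * c i)\<bar> \<le> t * K" for c
  proof -
    obtain h where h: "\<forall>i. h i - (\<Sum>j\<in>UNIV. P0 i j * h j) = c i - (\<Sum>j\<in>UNIV. pt 0 j * c j)"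
      using poisson[OF Pth_stoch[OF p_nonneg p_stoch theta] Pth_irred[where p=p, OF p_nonneg irred theta], of "pt 0" c]
        st0 s10 unfolding P0_def by blast
    have "\<bar>(\<Sum>i\<in>UNIV. pt t i * c i) - (\<Sum>i\<in>UNIV. pt 0 i * c i)\<bar> \<le> t * (\<Sum>i\<in>UNIV. \<bar>dPv h i\<bar>)"
      if t: "t \<in> {0..1}" for t
    proof -
      have s1: "(\<Sum>i\<in>UNIV. pt t i) = 1" using props[OF t] by auto
      have "(\<Sum>i\<in>UNIV. pt t i * c i) - (\<Sum>i\<in>UNIV. pt 0 i * c i)
          = (\<Sum>i\<in>UNIV. pt t i * (c i - (\<Sum>j\<in>UNIV. pt 0 j * c j)))"
        using s1 by (simp add: right_diff_distrib sum_subtractf sum_distrib_right[symmetric])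
      also have "\<dots> = (\<Sum>i\<in>UNIV. pt t i * (h i - (\<Sum>j\<in>UNIV. P0 i j * h j)))" using h by simp
      also have "\<dots> = t * (\<Sum>i\<in>UNIV. pt t i * dPv h i)" by (rule pert[OF t])
      finally have "\<bar>(\<Sum>i\<in>UNIV. pt t i * c i) - (\<Sum>i\<in>UNIV. pt 0 i * c i)\<bar> = t * \<bar>\<Sum>i\<in>UNIV. pt t i * dPv h i\<bar>"
        using t by (simp add: abs_mult)
      also have "\<dots> \<le> t * (\<Sum>i\<in>UNIV. \<bar>dPv h i\<bar>)" using bound[OF t] t by (intro mult_left_mono) auto
      finally show ?thesis .
    qed
    then show ?thesis by blast
  qed
  define R where "R = (\<lambda>t i. \<Sum>a\<in>UNIV. th t i a * r i a)"
  define A where "A = (\<lambda>t i. \<Sum>a\<in>UNIV. th t i a * (r i a - \<beta> * (r i a)\<^sup>2))"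
  define dR where "dR = (\<lambda>i. \<Sum>a\<in>UNIV. \<Delta> i a * r i a)"
  define dA where "dA = (\<lambda>i. \<Sum>a\<in>UNIV. \<Delta> i a * (r i a - \<beta> * (r i a)\<^sup>2))"
  define J where "J = (\<lambda>t. J_mu p r (th t))"
  define Js where "Js = (\<lambda>t. J_mu_sigma p r \<beta> (th t))"
  define cs where "cs = (\<lambda>i. dA i + 2 * \<beta> * J 0 * dR i + dPv g i)"
  have Jd: "J t = (\<Sum>i\<in>UNIV. pt t i * R t i)" for t unfolding J_def J_mu_def pt_def R_def by simp
  have Rlin: "R t i = R 0 i + t * dR i" for t i
  proof -
    have "R t i = (\<Sum>a\<in>UNIV. \<theta> i a * r i a + t * (\<Delta> i a * r i a))"
      unfolding R_def th_def \<Delta>_def by (rule sum.cong) (simp_all add: algebra_simps)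
    also have "\<dots> = R 0 i + t * dR i" by (simp add: sum.distrib sum_distrib_left R_def th0 dR_def)
    finally show ?thesis .
  qed
  have Alin: "A t i = A 0 i + t * dA i" for t i
  proof -
    have "A t i = (\<Sum>a\<in>UNIV. \<theta> i a * (r i a - \<beta> * (r i a)\<^sup>2) + t * (\<Delta> i a * (r i a - \<beta> * (r i a)\<^sup>2)))"
      unfolding A_def th_def \<Delta>_def by (rule sum.cong) (simp_all add: algebra_simps)
    also have "\<dots> = A 0 i + t * dA i" by (simp add: sum.distrib sum_distrib_left A_def th0 dA_def)
    finally show ?thesis .
  qed
  have fexp: "f_th p r \<beta> (th t) i = A t i + 2 * \<beta> * J t * R t i - \<beta> * (J t)\<^sup>2" if t: "t \<in> {0..1}" for t i
  proof -
    have s1: "(\<Sum>a\<in>UNIV. th t i a) = 1" using thT[OF t] unfolding Theta_def by auto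
    have "f_th p r \<beta> (th t) i = (\<Sum>a\<in>UNIV. th t i a * (r i a - \<beta> * (r i a)\<^sup>2) + (2 * \<beta> * J t) * (th t i a * r i a) - (\<beta> * (J t)\<^sup>2) * th t i a)"
      unfolding f_th_def J_def by (rule sum.cong) (simp_all add: algebra_simps power2_eq_square)
    also have "\<dots> = A t i + (2 * \<beta> * J t) * R t i - (\<beta> * (J t)\<^sup>2) * (\<Sum>a\<in>UNIV. th t i a)"
      unfolding A_def R_def by (simp add: sum.distrib sum_subtractf sum_distrib_left)
    finally show ?thesis using s1 by simp
  qed
  have Jsexp: "Js t = (\<Sum>i\<in>UNIV. pt t i * A t i) + \<beta> * (J t)\<^sup>2" if t: "t \<in> {0..1}" for t
  proof -
    have s1: "(\<Sum>i\<in>UNIV. pt t i) = 1" using props[OF t] by auto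
    have "Js t = (\<Sum>i\<in>UNIV. pt t i * A t i + (2 * \<beta> * J t) * (pt t i * R t i) - (\<beta> * (J t)\<^sup>2) * pt t i)"
      unfolding Js_def J_mu_sigma_def by (rule sum.cong) (simp_all add: fexp[OF t] algebra_simps pt_def)
    also have "\<dots> = (\<Sum>i\<in>UNIV. pt t i * A t i) + (2 * \<beta> * J t) * J t - (\<beta> * (J t)\<^sup>2) * (\<Sum>i\<in>UNIV. pt t i)"
      by (simp add: sum.distrib sum_subtractf sum_distrib_left Jd[of t])
    finally show ?thesis using s1 by (simp add: power2_eq_square)
  qed
  have pot0: "f_th p r \<beta> \<theta> i = g i - (\<Sum>j\<in>UNIV. P0 i j * g j) + Js 0" for i
    using pot unfolding is_potential_def Js_def th0 P0_def by (metis add_diff_cancel_left' diff_add_eq diff_diff_eq2)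
  have key: "Js t - Js 0 = t * (\<Sum>i\<in>UNIV. pt t i * cs i) + \<beta> * (J t - J 0)\<^sup>2" if t: "t \<in> {0..1}" for t
  proof -
    have s1: "(\<Sum>i\<in>UNIV. pt t i) = 1" using props[OF t] by auto
    have e1: "(\<Sum>i\<in>UNIV. pt t i * f_th p r \<beta> \<theta> i) = t * (\<Sum>i\<in>UNIV. pt t i * dPv g i) + Js 0"
    proof -
      have "(\<Sum>i\<in>UNIV. pt t i * f_th p r \<beta> \<theta> i) = (\<Sum>i\<in>UNIV. pt t i * (g i - (\<Sum>j\<in>UNIV. P0 i j * g j))) + Js 0 * (\<Sum>i\<in>UNIV. pt t i)"
        unfolding pot0 by (simp add: distrib_left sum.distrib sum_distrib_left mult.commute)
      then show ?thesis using pert[OF t, of g] s1 by simp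
    qed
    have e2: "(\<Sum>i\<in>UNIV. pt t i * f_th p r \<beta> \<theta> i) = (\<Sum>i\<in>UNIV. pt t i * A 0 i) + 2 * \<beta> * J 0 * (\<Sum>i\<in>UNIV. pt t i * R 0 i) - \<beta> * (J 0)\<^sup>2"
    proof -
      have "(\<Sum>i\<in>UNIV. pt t i * f_th p r \<beta> \<theta> i) = (\<Sum>i\<in>UNIV. pt t i * A 0 i + (2 * \<beta> * J 0) * (pt t i * R 0 i) - (\<beta> * (J 0)\<^sup>2) * pt t i)"
      proof (rule sum.cong[OF refl])
        fix i
        have fe: "f_th p r \<beta> \<theta> i = A 0 i + 2 * \<beta> * J 0 * R 0 i - \<beta> * (J 0)\<^sup>2"
          using fexp[of 0 i] th0 by simp
        show "pt t i * f_th p r \<beta> \<theta> i = pt t i * A 0 i + (2 * \<beta> * J 0) * (pt t i * R 0 i) - (\<beta> * (J 0)\<^sup>2) * pt t i"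
          unfolding fe by (simp add: algebra_simps)
      qed
      also have "\<dots> = (\<Sum>i\<in>UNIV. pt t i * A 0 i) + (2 * \<beta> * J 0) * (\<Sum>i\<in>UNIV. pt t i * R 0 i) - (\<beta> * (J 0)\<^sup>2) * (\<Sum>i\<in>UNIV. pt t i)"
        by (simp add: sum.distrib sum_subtractf sum_distrib_left)
      finally show ?thesis using s1 by simp
    qed
    have e3: "(\<Sum>i\<in>UNIV. pt t i * A t i) = (\<Sum>i\<in>UNIV. pt t i * A 0 i) + t * (\<Sum>i\<in>UNIV. pt t i * dA i)"
      by (simp add: Alin[of t] distrib_left sum.distrib sum_distrib_left mult.left_commute)
    have e4: "J t = (\<Sum>i\<in>UNIV. pt t i * R 0 i) + t * (\<Sum>i\<in>UNIV. pt t i * dR i)"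
      by (simp add: Jd[of t] Rlin[of t] distrib_left sum.distrib sum_distrib_left mult.left_commute)
    have e5: "(\<Sum>i\<in>UNIV. pt t i * cs i) = (\<Sum>i\<in>UNIV. pt t i * dA i) + 2 * \<beta> * J 0 * (\<Sum>i\<in>UNIV. pt t i * dR i) + (\<Sum>i\<in>UNIV. pt t i * dPv g i)"
      by (simp add: cs_def distrib_left sum.distrib sum_distrib_left mult.left_commute)
    show ?thesis using Jsexp[OF t] e1 e2 e3 e4 e5 by (simp add: algebra_simps power2_eq_square)
  qed
  define L where "L = (\<Sum>i\<in>UNIV. \<Sum>a\<in>UNIV. (\<theta>' i a - \<theta> i a) * D_ia p r \<beta> g \<theta> i a)"
  have Lid: "L = (\<Sum>i\<in>UNIV. pt 0 i * cs i)"
    unfolding L_def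
  proof (rule sum.cong[OF refl])
    fix i
    have dg: "dPv g i = (\<Sum>a\<in>UNIV. \<Delta> i a * (\<Sum>j\<in>UNIV. p a i j * g j))"
    proof -
      have "dPv g i = (\<Sum>j\<in>UNIV. \<Sum>a\<in>UNIV. \<Delta> i a * (p a i j * g j))"
        unfolding dPv_def dP_def by (simp add: sum_distrib_right sum_distrib_left algebra_simps)
      also have "\<dots> = (\<Sum>a\<in>UNIV. \<Sum>j\<in>UNIV. \<Delta> i a * (p a i j * g j))" by (rule sum.swap)
      finally show ?thesis by (simp add: sum_distrib_left)
    qed
    have J0: "J 0 = J_mu p r \<theta>" unfolding J_def th0 ..
    have "(\<Sum>a\<in>UNIV. (\<theta>' i a - \<theta> i a) * D_ia p r \<beta> g \<theta> i a)
        = (\<Sum>a\<in>UNIV. pt 0 i * (\<Delta> i a * (\<Sum>j\<in>UNIV. p a i j * g j)) + pt 0 i * (\<Delta> i a * (r i a - \<beta> * (r i a)\<^sup>2))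
             + pt 0 i * (2 * \<beta> * J 0) * (\<Delta> i a * r i a))"
      unfolding D_ia_def J0 pt_def th0 \<Delta>_def by (rule sum.cong) (simp_all add: algebra_simps)
    also have "\<dots> = pt 0 i * (\<Sum>a\<in>UNIV. \<Delta> i a * (\<Sum>j\<in>UNIV. p a i j * g j)) + pt 0 i * (\<Sum>a\<in>UNIV. \<Delta> i a * (r i a - \<beta> * (r i a)\<^sup>2))
             + pt 0 i * (2 * \<beta> * J 0) * (\<Sum>a\<in>UNIV. \<Delta> i a * r i a)"
      by (simp only: sum.distrib sum_distrib_left)
    also have "\<dots> = pt 0 i * cs i"
      unfolding cs_def dg dA_def dR_def by (simp add: algebra_simps)
    finally show "(\<Sum>a\<in>UNIV. (\<theta>' i a - \<theta> i a) * D_ia p r \<beta> g \<theta> i a) = pt 0 i * cs i" .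
  qed
  obtain K1 where K1: "\<forall>t\<in>{0..1}. \<bar>(\<Sum>i\<in>UNIV. pt t i * cs i) - (\<Sum>i\<in>UNIV. pt 0 i * cs i)\<bar> \<le> t * K1"
    using lip by blast
  obtain K2 where K2: "\<forall>t\<in>{0..1}. \<bar>(\<Sum>i\<in>UNIV. pt t i * R 0 i) - (\<Sum>i\<in>UNIV. pt 0 i * R 0 i)\<bar> \<le> t * K2"
    using lip by blast
  define B where "B = (\<Sum>i\<in>UNIV. \<bar>dR i\<bar>)"
  define M where "M = K2 + B"
  have Jb: "\<bar>J t - J 0\<bar> \<le> t * M" if t: "t \<in> {0..1}" for t
  proof -
    have "J t - J 0 = ((\<Sum>i\<in>UNIV. pt t i * R 0 i) - (\<Sum>i\<in>UNIV. pt 0 i * R 0 i)) + t * (\<Sum>i\<in>UNIV. pt t i * dR i)"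
      using Jd[of 0] Jd[of t] Rlin[of t] by (simp add: distrib_left sum.distrib sum_distrib_left mult.left_commute)
    then have "\<bar>J t - J 0\<bar> \<le> \<bar>(\<Sum>i\<in>UNIV. pt t i * R 0 i) - (\<Sum>i\<in>UNIV. pt 0 i * R 0 i)\<bar> + \<bar>t * (\<Sum>i\<in>UNIV. pt t i * dR i)\<bar>"
      by (simp only: abs_triangle_ineq)
    also have "\<bar>(\<Sum>i\<in>UNIV. pt t i * R 0 i) - (\<Sum>i\<in>UNIV. pt 0 i * R 0 i)\<bar> + \<bar>t * (\<Sum>i\<in>UNIV. pt t i * dR i)\<bar>
       = \<bar>(\<Sum>i\<in>UNIV. pt t i * R 0 i) - (\<Sum>i\<in>UNIV. pt 0 i * R 0 i)\<bar> + t * \<bar>\<Sum>i\<in>UNIV. pt t i * dR i\<bar>"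
      using t by (simp add: abs_mult)
    also have "\<dots> \<le> t * K2 + t * B"
      using K2 t bound[OF t, of dR] unfolding B_def by (intro add_mono mult_left_mono) auto
    finally show ?thesis unfolding M_def by (simp add: distrib_left)
  qed
  define C where "C = K1 + \<beta> * M\<^sup>2"
  have est: "\<bar>(Js t - Js 0) / (t - 0) - L\<bar> \<le> t * C" if t: "t \<in> {0<..<1}" for t
  proof -
    have t01: "t \<in> {0..1}" and tp: "t > 0" using t by auto
    define S where "S = (\<Sum>i\<in>UNIV. pt t i * cs i) - (\<Sum>i\<in>UNIV. pt 0 i * cs i)"
    define E where "E = \<beta> * (J t - J 0)\<^sup>2 / t"
    have "(Js t - Js 0) / (t - 0) = (t * (\<Sum>i\<in>UNIV. pt t i * cs i) + \<beta> * (J t - J 0)\<^sup>2) / t"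
      using key[OF t01] by simp
    also have "\<dots> = (\<Sum>i\<in>UNIV. pt t i * cs i) + E"
      unfolding E_def using tp by (simp add: add_divide_distrib)
    finally have "(Js t - Js 0) / (t - 0) - L = S + E" unfolding S_def Lid by simp
    moreover have "\<bar>S + E\<bar> \<le> t * K1 + E"
    proof -
      have "E \<ge> 0" unfolding E_def using beta_pos tp by simp
      moreover have "\<bar>S\<bar> \<le> t * K1" unfolding S_def using K1 t01 by blast
      ultimately show ?thesis using abs_triangle_ineq[of S E] by simp
    qed
    ultimately have "\<bar>(Js t - Js 0) / (t - 0) - L\<bar> \<le> t * K1 + \<beta> * (J t - J 0)\<^sup>2 / t"
      unfolding E_def by simp
    also have "\<beta> * (J t - J 0)\<^sup>2 / t \<le> \<beta> * (t * M)\<^sup>2 / t"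
    proof -
      have "(J t - J 0)\<^sup>2 = \<bar>J t - J 0\<bar>\<^sup>2" by simp
      also have "\<dots> \<le> (t * M)\<^sup>2" by (rule power_mono[OF Jb[OF t01]]) simp
      finally show ?thesis using beta_pos tp by (intro divide_right_mono mult_left_mono) auto
    qed
    also have "\<beta> * (t * M)\<^sup>2 / t = t * (\<beta> * M\<^sup>2)" using tp by (simp add: power2_eq_square field_simps)
    finally show ?thesis unfolding C_def by (simp add: distrib_left)
  qed
  have lim: "((\<lambda>t. (Js t - Js 0) / (t - 0)) \<longlongrightarrow> L) (at_right 0)"
  proof -
    have ev: "\<forall>\<^sub>F t in at_right 0. norm ((Js t - Js 0) / (t - 0) - L) \<le> t * C"
    proof -
      have "\<forall>\<^sub>F t in at_right (0::real). t \<in> {0<..<1}" by (rule eventually_at_right_real) simp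
      then show ?thesis by (rule eventually_mono) (use est in auto)
    qed
    have "((\<lambda>t::real. t * C) \<longlongrightarrow> 0 * C) (at_right 0)"
      by (intro tendsto_intros)
    then have "((\<lambda>t::real. t * C) \<longlongrightarrow> 0) (at_right 0)" by simp
    then have "((\<lambda>t. (Js t - Js 0) / (t - 0) - L) \<longlongrightarrow> 0) (at_right 0)"
      by (rule Lim_null_comparison[OF ev])
    then show ?thesis by (subst Lim_null)
  qed
  have "(Js has_real_derivative L) (at_right 0)"
    unfolding has_field_derivative_iff using lim by simp
  moreover have "(\<lambda>t. J_mu_sigma p r \<beta> (\<lambda>i a. \<theta> i a + t * (\<theta>' i a - \<theta> i a))) = Js"
    unfolding Js_def th_def ..
  ultimately show ?thesis unfolding L_def by simp
qed

end
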